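(* Let $\mathcal{D}=(\Omega,\mathcal{B})$ be a supersimple $2$-$(n,4,\lambda)$ design with $n=2\lambda+2$, and let $\infty\in\Omega$. The following are equivalent: (1) $\mathcal{D}$ satisfies property $(\triangle)$; (2) $\mathcal{D}$ is a Boolean quadruple system of order $2^m$ for some integer $m\ge2$; (3) $\pi_\infty(\mathcal{D})=\{1\}$ and $\mathcal{L}_\infty(\mathcal{D})$ is elementary abelian of order $2^m$ for some integer $m\ge2$.
   Context: A $2$-$(n,4,\lambda)$ design $(\Omega,\mathcal{B})$: $n$ points, a multiset of $4$-subsets (lines), every $2$-subset in exactly $\lambda$ lines; supersimple: distinct lines meet in at most two points. For distinct $a,b$ with lines $\{a,b,a_i,b_i\}$ ($1\le i\le\lambda$) through them, the elementary move is $[a,b]:=(a,b)\prod_i(a_i,b_i)\in\operatorname{Sym}(\Omega)$; $[a,a]:=1$. Permutations act on the right, products composed left to right; $[a_0,\dots,a_k]:=[a_0,a_1]\cdots[a_{k-1},a_k]$. $\mathcal{L}_\infty(\mathcal{D})$ is the set of all move sequences starting at $\infty$, and $\pi_\infty(\mathcal{D})$ the set of all move sequences starting and ending at $\infty$. Property $(\triangle)$: if $B_1,B_2\in\mathcal{B}$ with $|B_1\cap B_2|=2$ then $B_1\triangle B_2\in\mathcal{B}$. The Boolean quadruple system of order $2^m$ ($m\ge2$) is the design with point set $\mathbb{F}_2^m$ whose lines are the $4$-subsets $\{v_1,\dots,v_4\}$ with $\sum v_i=0$ (equivalently, the affine planes of $\mathbb{F}_2^m$); "$\mathcal{D}$ is"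 such a system means up to identification of the point set. *)

theory Defs
  imports Main "HOL-Library.Multiset" "HOL-Library.Z2"
begin

definition design_2_4 :: "'a set \<Rightarrow> 'a set multiset \<Rightarrow> nat \<Rightarrow> nat \<Rightarrow> bool" where
  "design_2_4 \<Omega> B n lam \<longleftrightarrow>
     finite \<Omega> \<and> card \<Omega> = n \<and>
     (\<forall>L\<in>#B. L \<subseteq> \<Omega> \<and> card L = 4) \<and>
     (\<forall>x\<in>\<Omega>. \<forall>y\<in>\<Omega>. x \<noteq> y \<longrightarrow> size (filter_mset (\<lambda>L. {x, y} \<subseteq> L) B) = lam)"

definition supersimple :: "'a set multiset \<Rightarrow> bool" where
  "supersimple B \<longleftrightarrow>
     (\<forall>L\<in>#B. count B L = 1) \<and>
     (\<forall>L1\<in>#B. \<forall>L2\<in>#B. L1 \<noteq> L2 \<longrightarrow> card (L1 \<inter> L2) \<le> 2)"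

definition prop_triangle :: "'a set multiset \<Rightarrow> bool" where
  "prop_triangle B \<longleftrightarrow>
     (\<forall>L1\<in>#B. \<forall>L2\<in>#B. card (L1 \<inter> L2) = 2 \<longrightarrow> (L1 - L2) \<union> (L2 - L1) \<in># B)"

text \<open>The elementary move [a,b] = (a,b) prod_i (a_i,b_i), written out as the function it is
  (the transpositions are disjoint): it swaps a and b, and for every line {a,b,a_i,b_i}
  through a and b swaps a_i and b_i; all other points are fixed. [a,a] = 1.\<close>
definition elem_move :: "'a set multiset \<Rightarrow> 'a \<Rightarrow> 'a \<Rightarrow> 'a \<Rightarrow> 'a" where
  "elem_move B a b x =
     (if a = b then x
      else if x = a then b
      else if x = b then a
      else if (\<exists>L\<in>#B. {a, b, x} \<subseteq> L)
           then (THE y. \<exists>L\<in>#B. {a, b, x} \<subseteq> L \<and> y \<in> L - {a, b, x})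
      else x)"

text \<open>[a_0,...,a_k] = [a_0,a_1]...[a_{k-1},a_k]; permutations act on the right and products
  are composed left to right, so as functions the product g h is h \<circ> g.\<close>
fun move_seq :: "'a set multiset \<Rightarrow> 'a list \<Rightarrow> 'a \<Rightarrow> 'a" where
  "move_seq B (a # b # xs) = move_seq B (b # xs) \<circ> elem_move B a b"
| "move_seq B _ = id"

definition L_inf :: "'a set \<Rightarrow> 'a set multiset \<Rightarrow> 'a \<Rightarrow> ('a \<Rightarrow> 'a) set" where
  "L_inf \<Omega> B pinf = {move_seq B (pinf # xs) | xs. set xs \<subseteq> \<Omega>}"

definition pi_inf :: "'a set \<Rightarrow> 'a set multiset \<Rightarrow> 'a \<Rightarrow> ('a \<Rightarrow> 'a) set" where
  "pi_inf \<Omega> B pinf = {move_seq B (pinf # xs @ [pinf]) | xs. set xs \<subseteq> \<Omega>}"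

definition elem_abelian_2group :: "('a \<Rightarrow> 'a) set \<Rightarrow> bool" where
  "elem_abelian_2group G \<longleftrightarrow>
     id \<in> G \<and> (\<forall>f\<in>G. \<forall>g\<in>G. f \<circ> g \<in> G) \<and>
     (\<forall>f\<in>G. f \<circ> f = id) \<and> (\<forall>f\<in>G. \<forall>g\<in>G. f \<circ> g = g \<circ> f)"

text \<open>F_2^m, realised as functions nat \<Rightarrow> bit vanishing outside {0..<m}.\<close>
definition F2vec :: "nat \<Rightarrow> (nat \<Rightarrow> bit) set" where
  "F2vec m = {v. \<forall>i\<ge>m. v i = 0}"

definition BQS_lines :: "nat \<Rightarrow> (nat \<Rightarrow> bit) set set" where
  "BQS_lines m = {{v1, v2, v3, v4} | v1 v2 v3 v4.
      v1 \<in> F2vec m \<and> v2 \<in> F2vec m \<and> v3 \<in> F2vec m \<and> v4 \<in> F2vec m \<and>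
      card {v1, v2, v3, v4} = 4 \<and> (\<forall>i. v1 i + v2 i + v3 i + v4 i = 0)}"

definition is_BQS :: "'a set \<Rightarrow> 'a set multiset \<Rightarrow> nat \<Rightarrow> bool" where
  "is_BQS \<Omega> B m \<longleftrightarrow>
     (\<exists>\<phi>. bij_betw \<phi> \<Omega> (F2vec m) \<and> image_mset (image \<phi>) B = mset_set (BQS_lines m))"

end

theory Submission imports Defs begin

definition vadd :: "(nat \<Rightarrow> bit) \<Rightarrow> (nat \<Rightarrow> bit) \<Rightarrow> (nat \<Rightarrow> bit)" where
  "vadd v w = (\<lambda>i. v i + w i)"

lemma bit_self[simp]: "(x::bit) + x = 0" by (cases x) auto
lemma bit_sum4: "(x::bit) + y + z + w = 0 \<longleftrightarrow> w = x + y + z" by (cases x; cases y; cases z; cases w) auto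
lemma bit_sum2: "(x::bit) + y = 0 \<longleftrightarrow> x = y" by (cases x; cases y) auto

lemma F2vec_vadd: "v \<in> F2vec m \<Longrightarrow> w \<in> F2vec m \<Longrightarrow> vadd v w \<in> F2vec m"
  by (simp add: F2vec_def vadd_def)

lemma F2vec_bij: "bij_betw (\<lambda>v. {i. v i = 1}) (F2vec m) (Pow {..<m})"
proof (rule bij_betw_byWitness[where f' = "\<lambda>S i. if i \<in> S then 1 else 0"])
  show "\<forall>a\<in>F2vec m. (\<lambda>i. if i \<in> {i. a i = 1} then 1 else 0) = a"
    by (auto simp: F2vec_def fun_eq_iff)
  show "\<forall>a'\<in>Pow {..<m}. {i. (if i \<in> a' then 1 else 0) = (1::bit)} = a'" by auto
  show "(\<lambda>v. {i. v i = 1}) ` F2vec m \<subseteq> Pow {..<m}"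
    by (auto simp: F2vec_def) (metis bit_not_one_iff linorder_not_less zero_neq_one)
  show "(\<lambda>S i. if i \<in> S then 1 else 0) ` Pow {..<m} \<subseteq> F2vec m" by (auto simp: F2vec_def)
qed

lemma card_F2vec: "card (F2vec m) = 2 ^ m"
  using bij_betw_same_card[OF F2vec_bij] by (simp add: card_Pow)

lemma finite_F2vec: "finite (F2vec m)"
  using bij_betw_finite[OF F2vec_bij] by simp

lemma card4_obtain:
  assumes "card X = 4"
  obtains a b c d where "X = {a,b,c,d}" "a \<noteq> b" "a \<noteq> c" "a \<noteq> d" "b \<noteq> c" "b \<noteq> d" "c \<noteq> d"
proof -
  have "card X = Suc 3" using assms by simp
  then obtain d X1 where X: "X = insert d X1" "d \<notin> X1" "card X1 = 3" using card_eq_SucD by blast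
  then obtain a b c where "X1 = {a,b,c}" "a \<noteq> b" "b \<noteq> c" "a \<noteq> c" using card_3_iff by metis
  with X show ?thesis using that[of a b c d] by auto
qed

lemma BQS_char: "X \<in> BQS_lines m \<longleftrightarrow> X \<subseteq> F2vec m \<and> card X = 4 \<and> (\<forall>i. (\<Sum>v\<in>X. v i) = 0)"
proof
  assume "X \<in> BQS_lines m"
  then obtain v1 v2 v3 v4 where X: "X = {v1,v2,v3,v4}" "v1 \<in> F2vec m" "v2 \<in> F2vec m" "v3 \<in> F2vec m" "v4 \<in> F2vec m"
    "card {v1,v2,v3,v4} = 4" "\<forall>i. v1 i + v2 i + v3 i + v4 i = 0" unfolding BQS_lines_def by blast
  have d: "v1 \<noteq> v2" "v1 \<noteq> v3" "v1 \<noteq> v4" "v2 \<noteq> v3" "v2 \<noteq> v4" "v3 \<noteq> v4"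
    using X(6) by (auto simp: card_insert_if split: if_splits)
  have "(\<Sum>v\<in>X. v i) = v1 i + v2 i + v3 i + v4 i" for i using d unfolding X(1) by (simp del: add_bit_eq_xor add: add.assoc)
  thus "X \<subseteq> F2vec m \<and> card X = 4 \<and> (\<forall>i. (\<Sum>v\<in>X. v i) = 0)" using X by auto
next
  assume A: "X \<subseteq> F2vec m \<and> card X = 4 \<and> (\<forall>i. (\<Sum>v\<in>X. v i) = 0)"
  then obtain v1 v2 v3 v4 where X: "X = {v1,v2,v3,v4}" "v1 \<noteq> v2" "v1 \<noteq> v3" "v1 \<noteq> v4" "v2 \<noteq> v3" "v2 \<noteq> v4" "v3 \<noteq> v4"
    using card4_obtain by metis
  have "(\<Sum>v\<in>X. v i) = v1 i + v2 i + v3 i + v4 i" for i using X unfolding X(1) by (simp del: add_bit_eq_xor add: add.assoc)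
  hence "\<forall>i. v1 i + v2 i + v3 i + v4 i = 0" using A by simp
  moreover have "v1 \<in> F2vec m \<and> v2 \<in> F2vec m \<and> v3 \<in> F2vec m \<and> v4 \<in> F2vec m \<and> card {v1,v2,v3,v4} = 4"
    using A unfolding X(1) by simp
  ultimately have P: "v1 \<in> F2vec m \<and> v2 \<in> F2vec m \<and> v3 \<in> F2vec m \<and> v4 \<in> F2vec m \<and>
      card {v1,v2,v3,v4} = 4 \<and> (\<forall>i. v1 i + v2 i + v3 i + v4 i = 0)" by blast
  show "X \<in> BQS_lines m" unfolding BQS_lines_def mem_Collect_eq X(1)
    by (rule exI[of _ v1], rule exI[of _ v2], rule exI[of _ v3], rule exI[of _ v4]) (rule conjI[OF refl P])
qed

lemma finite_BQS: "finite (BQS_lines m)"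
proof -
  have "X \<subseteq> F2vec m" if "X \<in> BQS_lines m" for X using that by (simp only: BQS_char)
  hence "BQS_lines m \<subseteq> Pow (F2vec m)" by blast
  moreover have "finite (Pow (F2vec m))" using finite_F2vec by simp
  ultimately show ?thesis by (rule finite_subset)
qed

fun psi :: "('a \<Rightarrow> 'a \<Rightarrow> 'a) \<Rightarrow> 'a \<Rightarrow> (nat \<Rightarrow> 'a) \<Rightarrow> nat \<Rightarrow> (nat \<Rightarrow> bit) \<Rightarrow> 'a" where
  "psi ad z g 0 v = z"
| "psi ad z g (Suc k) v = (if v k = 1 then ad (psi ad z g k v) (g k) else psi ad z g k v)"

lemma psi_trunc: "(\<And>i. i < k \<Longrightarrow> v i = w i) \<Longrightarrow> psi ad z g k v = psi ad z g k w"
  by (induction k) auto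

lemma psi_gcong: "(\<And>i. i < k \<Longrightarrow> g i = h i) \<Longrightarrow> psi ad z g k v = psi ad z h k v"
  by (induction k) auto



locale sqs =
  fixes \<Omega> :: "'a set" and B :: "'a set multiset" and lam :: nat
  assumes des: "design_2_4 \<Omega> B (2*lam+2) lam" and lam1: "lam \<ge> 1" and ss: "supersimple B"
begin

abbreviation M where "M \<equiv> elem_move B"

lemma finO: "finite \<Omega>" using des by (simp add: design_2_4_def)
lemma cardO: "card \<Omega> = 2*lam+2" using des by (simp add: design_2_4_def)
lemma lineO: "L \<in># B \<Longrightarrow> L \<subseteq> \<Omega>" using des by (simp add: design_2_4_def)
lemma line4: "L \<in># B \<Longrightarrow> card L = 4" using des by (simp add: design_2_4_def)
lemma cnt1: "L \<in># B \<Longrightarrow> count B L = 1" using ss by (simp add: supersimple_def)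
lemma inter2: "L1 \<in># B \<Longrightarrow> L2 \<in># B \<Longrightarrow> L1 \<noteq> L2 \<Longrightarrow> card (L1 \<inter> L2) \<le> 2"
  using ss by (simp add: supersimple_def)
lemma pairs: "x \<in> \<Omega> \<Longrightarrow> y \<in> \<Omega> \<Longrightarrow> x \<noteq> y \<Longrightarrow> size (filter_mset (\<lambda>L. {x, y} \<subseteq> L) B) = lam"
  using des by (simp add: design_2_4_def)

lemma lfin: "L \<in># B \<Longrightarrow> finite L" using finO lineO finite_subset by blast

lemma Bset: "B = mset_set (set_mset B)"
proof (rule multiset_eqI)
  fix L show "count B L = count (mset_set (set_mset B)) L"
    by (cases "L \<in># B") (simp_all add: cnt1 count_mset_set' not_in_iff)
qed

lemma filt_set: "filter_mset P B = mset_set {L \<in> set_mset B. P L}"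
proof (rule multiset_eqI)
  fix L show "count (filter_mset P B) L = count (mset_set {L \<in> set_mset B. P L}) L"
    by (cases "L \<in># B") (simp_all add: cnt1 count_mset_set' not_in_iff)
qed

lemma uniq:
  assumes "L1 \<in># B" "L2 \<in># B" "{a,b,x} \<subseteq> L1" "{a,b,x} \<subseteq> L2" "a \<noteq> b" "a \<noteq> x" "b \<noteq> x"
  shows "L1 = L2"
proof (rule ccontr)
  assume "L1 \<noteq> L2"
  hence "card (L1 \<inter> L2) \<le> 2" using inter2 assms by blast
  moreover have "card {a,b,x} \<le> card (L1 \<inter> L2)"
    using assms by (intro card_mono) (auto intro: lfin)
  ultimately show False using assms by auto
qed

lemma cover:
  assumes "a \<in> \<Omega>" "b \<in> \<Omega>" "x \<in> \<Omega>" "a \<noteq> b" "a \<noteq> x" "b \<noteq> x"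
  shows "\<exists>L\<in>#B. {a,b,x} \<subseteq> L"
proof -
  define S where "S = {L \<in> set_mset B. {a,b} \<subseteq> L}"
  have finS: "finite S" unfolding S_def by simp
  have cS: "card S = lam" using pairs[OF assms(1,2,4)] unfolding filt_set S_def by simp
  define U where "U = (\<Union>L\<in>S. L - {a,b})"
  have c2: "card (L - {a,b}) = 2" if "L \<in> S" for L
    using that line4 lfin assms(4) unfolding S_def by (auto simp: card_Diff_subset)
  have "card U = (\<Sum>L\<in>S. card (L - {a,b}))"
    unfolding U_def
  proof (rule card_UN_disjoint[OF finS])
    show "\<forall>i\<in>S. finite (i - {a, b})" using lfin S_def by auto
    show "\<forall>i\<in>S. \<forall>j\<in>S. i \<noteq> j \<longrightarrow> (i - {a, b}) \<inter> (j - {a, b}) = {}"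
    proof (intro ballI impI)
      fix i j assume ij: "i \<in> S" "j \<in> S" "i \<noteq> j"
      show "(i - {a, b}) \<inter> (j - {a, b}) = {}"
      proof (rule ccontr)
        assume "(i - {a, b}) \<inter> (j - {a, b}) \<noteq> {}"
        then obtain z where z: "z \<in> i" "z \<in> j" "z \<noteq> a" "z \<noteq> b" by blast
        have "i = j" using uniq[of i j a b z] ij z assms(4) unfolding S_def by auto
        thus False using ij by simp
      qed
    qed
  qed
  hence "card U = 2 * lam" using c2 cS by simp
  moreover have "U \<subseteq> \<Omega> - {a,b}" unfolding U_def S_def using lineO by auto
  moreover have "card (\<Omega> - {a,b}) = 2 * lam" using cardO assms finO by (simp add: card_Diff_subset)
  ultimately have "U = \<Omega> - {a,b}" using finO card_subset_eq[of "\<Omega> - {a,b}" U] by simp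
  hence "x \<in> U" using assms by auto
  then obtain L where "L \<in> S" "x \<in> L" unfolding U_def by auto
  thus ?thesis unfolding S_def by auto
qed

lemma four_split:
  assumes "card L = 4" "{a,b,x} \<subseteq> L" "a \<noteq> b" "a \<noteq> x" "b \<noteq> x"
  obtains y where "L = {a,b,x,y}" "y \<notin> {a,b,x}"
proof -
  have "finite L" using assms(1) by (metis card.infinite zero_neq_numeral)
  hence "card (L - {a,b,x}) = 1" using assms by (simp add: card_Diff_subset)
  then obtain y where y: "L - {a,b,x} = {y}" by (metis card_1_singletonE)
  hence "L = {a,b,x,y}" using assms(2) by auto
  thus ?thesis using that y by blast
qed

lemma move_char:
  assumes "L \<in># B" "{a,b,x} \<subseteq> L" "a \<noteq> b" "a \<noteq> x" "b \<noteq> x"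
  shows "L = {a,b,x,M a b x}" "M a b x \<notin> {a,b,x}"
proof -
  obtain y where y: "L = {a,b,x,y}" "y \<notin> {a,b,x}" using four_split[OF line4[OF assms(1)] assms(2-5)] by blast
  have ex: "\<exists>L\<in>#B. {a, b, x} \<subseteq> L" using assms by blast
  have "(THE y. \<exists>L\<in>#B. {a, b, x} \<subseteq> L \<and> y \<in> L - {a, b, x}) = y"
  proof (rule the_equality)
    have "y \<in> L - {a,b,x}" using y by blast
    thus "\<exists>L\<in>#B. {a, b, x} \<subseteq> L \<and> y \<in> L - {a, b, x}" using assms(1,2) by blast
    fix z assume "\<exists>L\<in>#B. {a, b, x} \<subseteq> L \<and> z \<in> L - {a, b, x}"
    then obtain L' where "L' \<in># B" "{a, b, x} \<subseteq> L'" "z \<in> L' - {a,b,x}" by blast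
    moreover have "L' = L" using uniq[of L' L a b x] calculation assms by blast
    ultimately show "z = y" using y by blast
  qed
  moreover have "M a b x = (THE y. \<exists>L\<in>#B. {a, b, x} \<subseteq> L \<and> y \<in> L - {a, b, x})"
    using assms(3-5) ex by (simp add: elem_move_def)
  ultimately have "M a b x = y" by simp
  thus "L = {a,b,x,M a b x}" "M a b x \<notin> {a,b,x}" using y by simp_all
qed

lemma M_same[simp]: "M a a x = x" by (simp add: elem_move_def)
lemma M_a[simp]: "M a b a = b" by (simp add: elem_move_def)
lemma M_b[simp]: "M a b b = a" by (simp add: elem_move_def)
lemma if_chain_sym: "(if a=b then x else if x=a then b else if x=b then a else if C then T else x) =
   (if b=a then x else if x=b then a else if x=a then b else if C then T else x)" by auto
lemma if_chain_out: "\<not> C \<Longrightarrow> x \<noteq> a \<Longrightarrow> x \<noteq> b \<Longrightarrow>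
   (if a=b then x else if x=a then b else if x=b then a else if C then T else x) = x" by auto
lemma M_sym: "M a b x = M b a x"
proof -
  have e: "{b,a,x} = {a,b,x}" by blast
  show ?thesis unfolding elem_move_def e by (rule if_chain_sym)
qed
lemma M_out: assumes "x \<notin> \<Omega>" "a \<in> \<Omega>" "b \<in> \<Omega>" shows "M a b x = x"
proof -
  have "\<not> (\<exists>L\<in>#B. {a, b, x} \<subseteq> L)" using assms lineO by blast
  moreover have "x \<noteq> a" "x \<noteq> b" using assms by auto
  ultimately show ?thesis unfolding elem_move_def by (rule if_chain_out)
qed

lemma blk:
  assumes "a \<in> \<Omega>" "b \<in> \<Omega>" "x \<in> \<Omega>" "a \<noteq> b" "a \<noteq> x" "b \<noteq> x"
  shows "{a,b,x,M a b x} \<in># B" "M a b x \<notin> {a,b,x}"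
proof -
  obtain L where L: "L \<in># B" "{a,b,x} \<subseteq> L" using cover[OF assms] by blast
  from move_char[OF L assms(4-6)] L(1)
  show "{a,b,x,M a b x} \<in># B" "M a b x \<notin> {a,b,x}" by simp_all
qed

lemma s_char:
  assumes "{a,b,c,d} \<in># B" "a \<noteq> b" "a \<noteq> c" "b \<noteq> c" "d \<notin> {a,b,c}"
  shows "M a b c = d"
proof -
  have "{a,b,c} \<subseteq> {a,b,c,d}" by blast
  from move_char[OF assms(1) this assms(2-4)]
  have "{a,b,c,d} = {a,b,c,M a b c}" "M a b c \<notin> {a,b,c}" .
  thus ?thesis using assms(5) by blast
qed

lemma M_in: assumes "a \<in> \<Omega>" "b \<in> \<Omega>" "x \<in> \<Omega>" shows "M a b x \<in> \<Omega>"
proof (cases "a = b \<or> a = x \<or> b = x")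
  case True thus ?thesis using assms by (auto simp: M_sym)
next
  case False
  hence "{a,b,x,M a b x} \<in># B" using blk assms by blast
  thus ?thesis using lineO by blast
qed

lemma M_swap: assumes "a \<in> \<Omega>" "b \<in> \<Omega>" "x \<in> \<Omega>" shows "M a b x = M a x b"
proof (cases "a = b \<or> a = x \<or> b = x")
  case True thus ?thesis using assms by (auto simp: M_sym)
next
  case False
  hence d: "{a,b,x,M a b x} \<in># B" "M a b x \<notin> {a,b,x}" using blk assms by blast+
  have "{a,x,b,M a b x} \<in># B" using d(1) by (simp add: insert_commute)
  from s_char[OF this] False d(2) show ?thesis by auto
qed

lemma M_inv: assumes "a \<in> \<Omega>" "b \<in> \<Omega>" "x \<in> \<Omega>" shows "M a b (M a b x) = x"
proof (cases "a = b \<or> a = x \<or> b = x")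
  case True thus ?thesis using assms by (auto simp: M_sym)
next
  case False
  hence d: "{a,b,x,M a b x} \<in># B" "M a b x \<notin> {a,b,x}" using blk assms by blast+
  have "{a,b,M a b x,x} \<in># B" using d(1) by (simp add: insert_commute)
  from s_char[OF this] False d(2) show ?thesis by auto
qed

lemma M_nofix: assumes "a \<in> \<Omega>" "b \<in> \<Omega>" "r \<in> \<Omega>" "a \<noteq> b" shows "M a b r \<noteq> r"
proof (cases "a = r \<or> b = r")
  case True thus ?thesis using assms by auto
next
  case False
  thus ?thesis using blk(2)[OF assms(1-3)] assms by auto
qed

lemma line_form:
  assumes "L \<in># B"
  obtains a b c where "a \<in> \<Omega>" "b \<in> \<Omega>" "c \<in> \<Omega>" "a \<noteq> b" "a \<noteq> c" "b \<noteq> c"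
    "L = {a,b,c,M a b c}" "M a b c \<notin> {a,b,c}"
proof -
  have c4: "card L = Suc 3" using line4 assms by simp
  then obtain d L1 where "L = insert d L1" "card L1 = 3" using card_eq_SucD by blast
  moreover then obtain a b c where "L1 = {a,b,c}" "a \<noteq> b" "b \<noteq> c" "a \<noteq> c" using card_3_iff by metis
  ultimately have abc: "{a,b,c} \<subseteq> L" "a \<noteq> b" "a \<noteq> c" "b \<noteq> c" by auto
  from move_char[OF assms abc] have "L = {a,b,c,M a b c}" "M a b c \<notin> {a,b,c}" .
  moreover have "a \<in> \<Omega>" "b \<in> \<Omega>" "c \<in> \<Omega>" using abc lineO[OF assms] by auto
  ultimately show ?thesis using that abc by blast
qed

definition Tprop where "Tprop \<longleftrightarrow> (\<forall>a\<in>\<Omega>. \<forall>b\<in>\<Omega>. \<forall>c\<in>\<Omega>. \<forall>x\<in>\<Omega>. M c (M a b c) x = M a b x)"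

lemma tri_T_aux:
  assumes tri: "prop_triangle B" and abc: "a \<in> \<Omega>" "b \<in> \<Omega>" "c \<in> \<Omega>" "x \<in> \<Omega>"
    and dist: "a \<noteq> b" "a \<noteq> c" "b \<noteq> c"
  shows "M c (M a b c) x = M a b x"
proof -
  define d where "d = M a b c"
  have L1: "{a,b,c,d} \<in># B" "d \<notin> {a,b,c}" using blk[OF abc(1-3) dist] unfolding d_def by blast+
  have dO: "d \<in> \<Omega>" using M_in abc unfolding d_def by blast
  have "M c d x = M a b x"
  proof (cases "x \<in> {a,b,c,d}")
    case True
    have e1: "{c,d,a,b} = {a,b,c,d}" "{c,d,b,a} = {a,b,c,d}" "{a,b,d,c} = {a,b,c,d}" by blast+
    have "M c d a = b"
      apply (rule s_char) apply (subst e1(1)) apply (rule L1(1)) using L1(2) dist by auto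
    moreover have "M c d b = a"
      apply (rule s_char) apply (subst e1(2)) apply (rule L1(1)) using L1(2) dist by auto
    moreover have "M a b d = c"
      apply (rule s_char) apply (subst e1(3)) apply (rule L1(1)) using L1(2) dist by auto
    moreover have "x = a \<or> x = b \<or> x = c \<or> x = d" using True by simp
    ultimately show ?thesis using d_def by (metis M_a M_b)
  next
    case False
    define y where "y = M a b x"
    have xd: "a \<noteq> x" "b \<noteq> x" "c \<noteq> x" "d \<noteq> x" using False by auto
    have L2: "{a,b,x,y} \<in># B" "y \<notin> {a,b,x}" using blk[OF abc(1,2,4) dist(1) xd(1,2)] unfolding y_def by blast+
    have yc: "y \<noteq> c"
    proof
      assume "y = c"
      hence "{a,b,c} \<subseteq> {a,b,x,y}" by blast
      hence "{a,b,x,y} = {a,b,c,d}" using uniq[OF L2(1) L1(1)] dist by blast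
      hence "x \<in> {a,b,c,d}" by (rule equalityD1[THEN subsetD]) simp
      thus False using xd by simp
    qed
    have yd: "y \<noteq> d"
    proof
      assume yd: "y = d"
      have s1: "{a,b,d} \<subseteq> {a,b,x,y}" using yd by simp
      have s2: "{a,b,d} \<subseteq> {a,b,c,d}" by simp
      have "a \<noteq> d" "b \<noteq> d" using L1(2) by auto
      hence "{a,b,x,y} = {a,b,c,d}" using uniq[OF L2(1) L1(1) s1 s2 dist(1)] by simp
      hence "x \<in> {a,b,c,d}" by (rule equalityD1[THEN subsetD]) simp
      thus False using xd by simp
    qed
    have "{a,b,c,d} \<inter> {a,b,x,y} = {a,b}" using xd yc yd L1(2) L2(2) by auto
    hence "card ({a,b,c,d} \<inter> {a,b,x,y}) = 2" using dist by simp
    have tri': "\<And>L1 L2. L1 \<in># B \<Longrightarrow> L2 \<in># B \<Longrightarrow> card (L1 \<inter> L2) = 2 \<Longrightarrow> (L1 - L2) \<union> (L2 - L1) \<in># B"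
      using tri unfolding prop_triangle_def by blast
    have "({a,b,c,d} - {a,b,x,y}) \<union> ({a,b,x,y} - {a,b,c,d}) \<in># B"
      by (rule tri'[OF L1(1) L2(1)]) fact
    moreover have "({a,b,c,d} - {a,b,x,y}) \<union> ({a,b,x,y} - {a,b,c,d}) = {c,d,x,y}"
      using xd yc yd L1(2) L2(2) dist by auto
    ultimately have "{c,d,x,y} \<in># B" by simp
    hence "M c d x = y" by (rule s_char) (use xd yc yd L1(2) L2(2) in auto)
    thus ?thesis unfolding y_def .
  qed
  thus ?thesis unfolding d_def .
qed

lemma tri_T: assumes "prop_triangle B" shows "Tprop"
  unfolding Tprop_def
proof (intro ballI)
  fix a b c x assume abc: "a \<in> \<Omega>" "b \<in> \<Omega>" "c \<in> \<Omega>" "x \<in> \<Omega>"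
  show "M c (M a b c) x = M a b x"
  proof (cases "a = b \<or> a = c \<or> b = c")
    case True thus ?thesis by (auto simp: M_sym)
  next
    case False thus ?thesis using tri_T_aux[OF assms abc] by blast
  qed
qed

lemma T_tri: assumes T: "Tprop" shows "prop_triangle B"
  unfolding prop_triangle_def
proof (intro ballI impI)
  fix L1 L2 assume L: "L1 \<in># B" "L2 \<in># B" and c2: "card (L1 \<inter> L2) = 2"
  obtain a b where ab: "L1 \<inter> L2 = {a,b}" "a \<noteq> b" using c2 card_2_iff by metis
  have f1: "finite L1" "finite L2" using L lfin by auto
  have s1: "{a,b} \<subseteq> L1" "{a,b} \<subseteq> L2" using ab by blast+
  have "card (L1 - {a,b}) = 2" using ab f1 line4[OF L(1)] s1 by (simp add: card_Diff_subset)
  then obtain c d where cd: "L1 - {a,b} = {c,d}" "c \<noteq> d" using card_2_iff by metis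
  have "card (L2 - {a,b}) = 2" using ab f1 line4[OF L(2)] s1 by (simp add: card_Diff_subset)
  then obtain x y where xy: "L2 - {a,b} = {x,y}" "x \<noteq> y" using card_2_iff by metis
  have e1: "L1 = {a,b,c,d}" using cd ab by blast
  have e2: "L2 = {a,b,x,y}" using xy ab by blast
  have cdn: "c \<noteq> a" "c \<noteq> b" "d \<noteq> a" "d \<noteq> b" "x \<noteq> a" "x \<noteq> b" "y \<noteq> a" "y \<noteq> b" using cd xy by blast+
  have cross: "c \<noteq> x" "c \<noteq> y" "d \<noteq> x" "d \<noteq> y" using ab cd xy e1 e2 by blast+
  have O: "a \<in> \<Omega>" "b \<in> \<Omega>" "c \<in> \<Omega>" "x \<in> \<Omega>" using lineO L e1 e2 by blast+
  have "M a b c = d" by (rule s_char) (use L(1) e1 cdn ab cd in auto)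
  moreover have "M a b x = y" by (rule s_char) (use L(2) e2 cdn ab xy in auto)
  ultimately have "M c d x = y" using T O unfolding Tprop_def by metis
  moreover have "{c,d,x,M c d x} \<in># B"
    using blk(1)[of c d x] O lineO[OF L(1)] e1 cd cross by auto
  ultimately have "{c,d,x,y} \<in># B" by simp
  moreover have "(L1 - L2) \<union> (L2 - L1) = {c,d,x,y}" using e1 e2 ab cdn cross cd xy by blast
  ultimately show "(L1 - L2) \<union> (L2 - L1) \<in># B" by simp
qed

lemma T_C: assumes T: "Tprop" and O: "a \<in> \<Omega>" "b \<in> \<Omega>" "c \<in> \<Omega>"
  shows "M b c \<circ> M a b = M a c"
proof
  fix x
  show "(M b c \<circ> M a b) x = M a c x"
  proof (cases "x \<in> \<Omega>")
    case False thus ?thesis using O by (simp add: M_out)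
  next
    case True
    define y where "y = M a b x"
    have yO: "y \<in> \<Omega>" using M_in O True y_def by blast
    have "M b (M a x b) c = M a x c" using T O True unfolding Tprop_def by blast
    moreover have "M a x b = y" using M_swap O True y_def by metis
    ultimately have "M b y c = M a x c" by simp
    thus ?thesis using M_swap O True yO y_def by (metis comp_apply)
  qed
qed

lemma M_id: "M a a = id" by (rule ext) simp
lemma M_sym_fun: "M a b = M b a" by (rule ext) (rule M_sym)
lemma M_invol: assumes "a \<in> \<Omega>" "b \<in> \<Omega>" shows "M a b \<circ> M a b = id"
proof
  fix x show "(M a b \<circ> M a b) x = id x"
    by (cases "x \<in> \<Omega>") (simp_all add: M_inv M_out assms)
qed

lemma T_fun: assumes T: Tprop and O: "a \<in> \<Omega>" "b \<in> \<Omega>" "c \<in> \<Omega>" shows "M c (M a b c) = M a b"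
proof
  fix x
  have "M a b c \<in> \<Omega>" using M_in O by blast
  thus "M c (M a b c) x = M a b x"
    using T O unfolding Tprop_def by (cases "x \<in> \<Omega>") (simp_all add: M_out)
qed

lemma move_seq_in: "set xs \<subseteq> \<Omega> \<Longrightarrow> x \<in> \<Omega> \<Longrightarrow> move_seq B xs x \<in> \<Omega>"
proof (induction xs arbitrary: x)
  case Nil thus ?case by simp
next
  case (Cons a ys)
  show ?case
  proof (cases ys)
    case Nil thus ?thesis using Cons by simp
  next
    case (Cons b zs)
    note Cons2 = this
    have "M a b x \<in> \<Omega>" using M_in Cons.prems Cons2 by simp
    hence "move_seq B ys (M a b x) \<in> \<Omega>" using Cons.IH Cons.prems by simp
    thus ?thesis using Cons2 by simp
  qed
qed

lemma tele: assumes T: Tprop shows "a \<in> \<Omega> \<Longrightarrow> set xs \<subseteq> \<Omega> \<Longrightarrow> move_seq B (a # xs) = M a (last (a # xs))"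
proof (induction xs arbitrary: a)
  case Nil thus ?case by (simp add: M_id)
next
  case (Cons b ys)
  have "move_seq B (a # b # ys) = move_seq B (b # ys) \<circ> M a b" by simp
  also have "\<dots> = M b (last (b # ys)) \<circ> M a b" using Cons by simp
  also have "\<dots> = M a (last (b # ys))"
    using T_C[OF T] Cons.prems by (metis in_set_conv_decomp last_in_set list.distinct(1) list.set_intros(1) set_subset_Cons subsetD)
  finally show ?case by simp
qed

lemma move_snoc: "xs \<noteq> [] \<Longrightarrow> move_seq B (xs @ [y]) = M (last xs) y \<circ> move_seq B xs"
proof (induction xs)
  case Nil thus ?case by simp
next
  case (Cons a xs)
  show ?case
  proof (cases xs)
    case Nil thus ?thesis by simp
  next
    case (Cons b zs)
    hence "move_seq B ((a # xs) @ [y]) = move_seq B (xs @ [y]) \<circ> M a b" by simp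
    also have "\<dots> = M (last xs) y \<circ> move_seq B xs \<circ> M a b"
    proof -
      have ne: "xs \<noteq> []" using Cons by simp
      show ?thesis by (simp only: Cons.IH[OF ne])
    qed
    also have "\<dots> = M (last (a # xs)) y \<circ> move_seq B (a # xs)" using Cons by (simp add: comp_assoc)
    finally show ?thesis .
  qed
qed

lemma L_inf_I: "set xs \<subseteq> \<Omega> \<Longrightarrow> move_seq B (p # xs) \<in> L_inf \<Omega> B p"
  unfolding L_inf_def by blast
lemma pi_inf_I: "set xs \<subseteq> \<Omega> \<Longrightarrow> move_seq B (p # xs @ [p]) \<in> pi_inf \<Omega> B p"
  unfolding pi_inf_def by blast

lemma T_L: assumes T: Tprop and p: "p \<in> \<Omega>" shows "L_inf \<Omega> B p = M p ` \<Omega>"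
proof
  show "L_inf \<Omega> B p \<subseteq> M p ` \<Omega>"
  proof
    fix f assume "f \<in> L_inf \<Omega> B p"
    then obtain xs where xs: "f = move_seq B (p # xs)" "set xs \<subseteq> \<Omega>" unfolding L_inf_def by blast
    hence "f = M p (last (p # xs))" using tele[OF T p] by simp
    moreover have "last (p # xs) \<in> \<Omega>" using xs p by (metis last_in_set list.distinct(1) set_ConsD subsetD)
    ultimately show "f \<in> M p ` \<Omega>" by blast
  qed
  show "M p ` \<Omega> \<subseteq> L_inf \<Omega> B p"
  proof
    fix f assume "f \<in> M p ` \<Omega>"
    then obtain x where x: "x \<in> \<Omega>" "f = M p x" by blast
    have "move_seq B (p # [x]) = M p x" by simp
    thus "f \<in> L_inf \<Omega> B p" using x L_inf_I[of "[x]" p] by simp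
  qed
qed

lemma T_pi: assumes T: Tprop and p: "p \<in> \<Omega>" shows "pi_inf \<Omega> B p = {id}"
proof
  show "pi_inf \<Omega> B p \<subseteq> {id}"
  proof
    fix f assume "f \<in> pi_inf \<Omega> B p"
    then obtain xs where xs: "f = move_seq B (p # xs @ [p])" "set xs \<subseteq> \<Omega>" unfolding pi_inf_def by blast
    hence "f = M p (last (p # xs @ [p]))" using tele[OF T p, of "xs @ [p]"] p by simp
    thus "f \<in> {id}" by (simp add: M_id)
  qed
  have "move_seq B (p # [] @ [p]) = id" by (simp add: M_id)
  thus "{id} \<subseteq> pi_inf \<Omega> B p" using pi_inf_I[of "[]" p] by simp
qed

lemma T_group: assumes T: Tprop and p: "p \<in> \<Omega>" shows "elem_abelian_2group (L_inf \<Omega> B p)"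
proof -
  have cl: "M p x \<circ> M p y = M p (M y x p)" if "x \<in> \<Omega>" "y \<in> \<Omega>" for x y
  proof -
    have "M p x \<circ> M p y = M p x \<circ> M y p" by (simp add: M_sym_fun)
    also have "\<dots> = M y x" using T_C[OF T that(2) p that(1)] .
    also have "\<dots> = M p (M y x p)" using T_fun[OF T that(2) that(1) p] by simp
    finally show ?thesis .
  qed
  have cm: "M p x \<circ> M p y = M p y \<circ> M p x" if "x \<in> \<Omega>" "y \<in> \<Omega>" for x y
  proof -
    have "M p x \<circ> M p y = M p x \<circ> M y p" by (simp add: M_sym_fun)
    also have "\<dots> = M y x" using T_C[OF T that(2) p that(1)] .
    also have "\<dots> = M x y" by (simp add: M_sym_fun)
    also have "\<dots> = M p y \<circ> M x p" using T_C[OF T that(1) p that(2)] by simp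
    finally show ?thesis by (simp add: M_sym_fun)
  qed
  show ?thesis unfolding elem_abelian_2group_def T_L[OF T p]
  proof (intro conjI ballI)
    show "id \<in> M p ` \<Omega>" using p M_id by (metis image_eqI)
  next
    fix f g assume "f \<in> M p ` \<Omega>" "g \<in> M p ` \<Omega>"
    then obtain x y where "x \<in> \<Omega>" "y \<in> \<Omega>" "f = M p x" "g = M p y" by blast
    moreover have "M y x p \<in> \<Omega>" using M_in calculation p by blast
    ultimately show "f \<circ> g \<in> M p ` \<Omega>" using cl by auto
  next
    fix f g assume "f \<in> M p ` \<Omega>" "g \<in> M p ` \<Omega>"
    then obtain x y where "x \<in> \<Omega>" "y \<in> \<Omega>" "f = M p x" "g = M p y" by blast
    thus "f \<circ> g = g \<circ> f" using cm by auto
  next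
    fix f assume "f \<in> M p ` \<Omega>"
    thus "f \<circ> f = id" using M_invol p by blast
  qed
qed

lemma T_card: assumes T: Tprop and p: "p \<in> \<Omega>" shows "card (L_inf \<Omega> B p) = card \<Omega>"
proof -
  have "inj_on (M p) \<Omega>" by (rule inj_onI) (metis M_a)
  thus ?thesis unfolding T_L[OF T p] by (rule card_image)
qed

lemma G3_T:
  assumes p: "p \<in> \<Omega>" and pi: "pi_inf \<Omega> B p = {id}" and G: "elem_abelian_2group (L_inf \<Omega> B p)"
  shows Tprop
proof -
  have cl: "f \<circ> g \<in> L_inf \<Omega> B p" if "f \<in> L_inf \<Omega> B p" "g \<in> L_inf \<Omega> B p" for f g
    using G that unfolding elem_abelian_2group_def by blast
  have inv: "f \<circ> f = id" if "f \<in> L_inf \<Omega> B p" for f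
    using G that unfolding elem_abelian_2group_def by blast
  have Mp: "M p x \<in> L_inf \<Omega> B p" if "x \<in> \<Omega>" for x
  proof -
    have "move_seq B (p # [x]) = M p x" by simp
    thus ?thesis using that L_inf_I[of "[x]" p] by simp
  qed
  have Mab: "M a b \<in> L_inf \<Omega> B p" if "a \<in> \<Omega>" "b \<in> \<Omega>" for a b
  proof -
    have "move_seq B (p # [a,b]) = M a b \<circ> M p a" by simp
    hence "M a b \<circ> M p a \<in> L_inf \<Omega> B p" using that L_inf_I[of "[a,b]" p] by simp
    hence "(M a b \<circ> M p a) \<circ> M p a \<in> L_inf \<Omega> B p" using cl Mp that by blast
    moreover have "(M a b \<circ> M p a) \<circ> M p a = M a b" using M_invol[OF p that(1)] by (simp add: comp_assoc)
    ultimately show ?thesis by simp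
  qed
  have LO: "f x \<in> \<Omega>" if "f \<in> L_inf \<Omega> B p" "x \<in> \<Omega>" for f x
    using that move_seq_in p unfolding L_inf_def by auto
  have fixp: "f = id" if f: "f \<in> L_inf \<Omega> B p" and fp: "f p = p" for f
  proof -
    obtain xs where xs: "f = move_seq B (p # xs)" "set xs \<subseteq> \<Omega>" using f unfolding L_inf_def by blast
    show ?thesis
    proof (cases "xs = []")
      case True thus ?thesis using xs by simp
    next
      case False
      define z where "z = last xs"
      have zO: "z \<in> \<Omega>" using False xs z_def by auto
      have "move_seq B ((p # xs) @ [p]) = M z p \<circ> f" using move_snoc[of "p # xs" p] xs False z_def by simp
      moreover have "move_seq B ((p # xs) @ [p]) \<in> pi_inf \<Omega> B p" using xs pi_inf_I[of xs p] by simp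
      ultimately have "M z p \<circ> f = id" using pi by simp
      hence "M z p \<circ> (M z p \<circ> f) = M z p" by simp
      hence ff: "f = M z p" using M_invol[OF zO p] by (simp add: comp_assoc[symmetric])
      hence "z = p" using fp by simp
      thus ?thesis using ff by (simp add: M_id)
    qed
  qed
  have fixr: "f = id" if f: "f \<in> L_inf \<Omega> B p" and r: "r \<in> \<Omega>" and fr: "f r = r" for f r
  proof -
    define y where "y = f p"
    have yO: "y \<in> \<Omega>" using LO f p y_def by blast
    have "M p y \<circ> f \<in> L_inf \<Omega> B p" using cl Mp yO f by blast
    moreover have "(M p y \<circ> f) p = p" using y_def by simp
    ultimately have "M p y \<circ> f = id" using fixp by blast
    hence "M p y \<circ> (M p y \<circ> f) = M p y" by simp
    hence ff: "f = M p y" using M_invol[OF p yO] by (simp add: comp_assoc[symmetric])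
    have "p = y"
    proof (rule ccontr)
      assume "p \<noteq> y" thus False using M_nofix[OF p yO r] fr ff by simp
    qed
    thus ?thesis using ff by (simp add: M_id)
  qed
  have agree: "f = g" if "f \<in> L_inf \<Omega> B p" "g \<in> L_inf \<Omega> B p" "r \<in> \<Omega>" "f r = g r" for f g r
  proof -
    have "g \<circ> f \<in> L_inf \<Omega> B p" using cl that by blast
    moreover have "(g \<circ> f) r = r" using that inv[OF that(2)] by (metis comp_apply id_apply)
    ultimately have "g \<circ> f = id" using fixr that(3) by blast
    hence "g \<circ> (g \<circ> f) = g" by simp
    thus ?thesis using inv[OF that(2)] by (simp add: comp_assoc[symmetric])
  qed
  show ?thesis unfolding Tprop_def
  proof (intro ballI)
    fix a b c x assume O: "a \<in> \<Omega>" "b \<in> \<Omega>" "c \<in> \<Omega>" "x \<in> \<Omega>"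
    have dO: "M a b c \<in> \<Omega>" using M_in O by blast
    have "M c (M a b c) = M a b"
      by (rule agree[OF Mab[OF O(3) dO] Mab[OF O(1,2)] O(3)]) simp
    thus "M c (M a b c) x = M a b x" by simp
  qed
qed

end

locale sqsT = sqs +
  fixes p assumes T: Tprop and pO: "p \<in> \<Omega>"
begin

lemma ad_in: "x \<in> \<Omega> \<Longrightarrow> y \<in> \<Omega> \<Longrightarrow> M p x y \<in> \<Omega>" using M_in pO by blast
lemma ad_comm: "x \<in> \<Omega> \<Longrightarrow> y \<in> \<Omega> \<Longrightarrow> M p x y = M p y x" using M_swap pO by blast
lemma s_add: assumes "a \<in> \<Omega>" "b \<in> \<Omega>" "c \<in> \<Omega>" shows "M p (M p a b) c = M a b c"
proof -
  have "M p (M a b p) c = M a b c" using T assms pO unfolding Tprop_def by blast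
  moreover have "M a b p = M p a b" using M_swap[OF assms(1,2) pO] M_sym by metis
  ultimately show ?thesis by simp
qed
lemma ad_assoc: assumes "x \<in> \<Omega>" "y \<in> \<Omega>" "z \<in> \<Omega>" shows "M p (M p x y) z = M p x (M p y z)"
proof -
  have "M p (M p x y) z = M x y z" using s_add assms by blast
  moreover have "M p x (M p y z) = M p (M p y z) x" using ad_comm ad_in assms by metis
  moreover have "\<dots> = M y z x" using s_add assms by blast
  moreover have "M y z x = M x y z" using M_swap[OF assms(2,3,1)] M_sym by metis
  ultimately show ?thesis by simp
qed
lemma ad_cancel: assumes "x \<in> \<Omega>" "y \<in> \<Omega>" shows "M p (M p x y) y = x"
  using s_add[OF assms assms(2)] by simp

lemma id10: assumes "P \<in> \<Omega>" "Q \<in> \<Omega>" "G \<in> \<Omega>" shows "M p (M p P Q) G = M p (M p P G) Q"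
  using s_add assms M_swap by metis
lemma id01: assumes "P \<in> \<Omega>" "Q \<in> \<Omega>" "G \<in> \<Omega>" shows "M p (M p P Q) G = M p P (M p Q G)"
  using ad_assoc assms by blast
lemma id11: assumes "P \<in> \<Omega>" "Q \<in> \<Omega>" "G \<in> \<Omega>" shows "M p P Q = M p (M p P G) (M p Q G)"
proof -
  have "M p (M p P G) (M p Q G) = M p (M p (M p P G) Q) G" using ad_assoc ad_in assms by metis
  also have "\<dots> = M p (M p (M p P Q) G) G" using id10 assms by metis
  also have "\<dots> = M p P Q" using ad_cancel ad_in assms by metis
  finally show ?thesis by simp
qed

abbreviation ps where "ps g k v \<equiv> psi (M p) p g k v"

lemma ps_in: "(\<And>i. i < k \<Longrightarrow> g i \<in> \<Omega>) \<Longrightarrow> ps g k v \<in> \<Omega>"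
  by (induction k) (auto simp: pO ad_in)

lemma ps_add: "(\<And>i. i < k \<Longrightarrow> g i \<in> \<Omega>) \<Longrightarrow> ps g k (vadd v w) = M p (ps g k v) (ps g k w)"
proof (induction k)
  case 0 thus ?case by (simp add: pO)
next
  case (Suc k)
  have IH: "ps g k (vadd v w) = M p (ps g k v) (ps g k w)" using Suc by simp
  have O: "ps g k v \<in> \<Omega>" "ps g k w \<in> \<Omega>" "g k \<in> \<Omega>" using Suc.prems ps_in by auto
  show ?case
  proof (cases "v k")
    case zero
    show ?thesis
    proof (cases "w k")
      case zero thus ?thesis using \<open>v k = 0\<close> IH by (simp add: vadd_def)
    next
      case one thus ?thesis using \<open>v k = 0\<close> IH id01[OF O] by (simp add: vadd_def)
    qed
  next
    case one
    show ?thesis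
    proof (cases "w k")
      case zero thus ?thesis using \<open>v k = 1\<close> IH id10[OF O] by (simp add: vadd_def)
    next
      case one thus ?thesis using \<open>v k = 1\<close> IH id11[OF O] by (simp add: vadd_def)
    qed
  qed
qed

lemma basis: "\<exists>m g. (\<forall>i<m. g i \<in> \<Omega>) \<and> bij_betw (ps g m) (F2vec m) \<Omega>"
proof -
  define Pm where "Pm m \<longleftrightarrow> (\<exists>g. (\<forall>i<m. g i \<in> \<Omega>) \<and> inj_on (ps g m) (F2vec m))" for m
  have bound: "m \<le> card \<Omega>" if "Pm m" for m
  proof -
    obtain g where g: "\<forall>i<m. g i \<in> \<Omega>" "inj_on (ps g m) (F2vec m)" using \<open>Pm m\<close> Pm_def by blast
    have "ps g m ` F2vec m \<subseteq> \<Omega>" using ps_in g(1) by blast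
    hence "card (F2vec m) \<le> card \<Omega>" using card_inj_on_le g(2) finO by blast
    hence "2 ^ m \<le> card \<Omega>" by (simp add: card_F2vec)
    moreover have "m < 2 ^ m" by (rule less_exp)
    ultimately show ?thesis by linarith
  qed
  have P0: "Pm 0"
  proof -
    have "inj_on (ps (\<lambda>_. p) 0) (F2vec 0)"
      by (rule inj_onI) (auto simp: F2vec_def fun_eq_iff)
    thus ?thesis unfolding Pm_def by blast
  qed
  define m0 where "m0 = (GREATEST m. Pm m)"
  have Pm0: "Pm m0" unfolding m0_def by (rule GreatestI_nat[where P=Pm, OF P0]) (use bound in blast)
  have maxm: "m \<le> m0" if "Pm m" for m unfolding m0_def by (rule Greatest_le_nat[where P=Pm, OF that]) (use bound in blast)
  obtain g where g: "\<forall>i<m0. g i \<in> \<Omega>" "inj_on (ps g m0) (F2vec m0)" using Pm0 Pm_def by blast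
  have sur: "ps g m0 ` F2vec m0 = \<Omega>"
  proof (rule ccontr)
    assume ne: "ps g m0 ` F2vec m0 \<noteq> \<Omega>"
    have "ps g m0 ` F2vec m0 \<subseteq> \<Omega>" using ps_in g(1) by blast
    then obtain h where h: "h \<in> \<Omega>" "h \<notin> ps g m0 ` F2vec m0" using ne by blast
    define g' where "g' = g(m0 := h)"
    have g'O: "\<forall>i<Suc m0. g' i \<in> \<Omega>" using g(1) h(1) unfolding g'_def by (simp add: less_Suc_eq)
    define tr where "tr v = v(m0 := 0)" for v :: "nat \<Rightarrow> bit"
    have trF: "tr v \<in> F2vec m0" if vF: "v \<in> F2vec (Suc m0)" for v
      unfolding F2vec_def mem_Collect_eq
    proof (intro allI impI)
      fix i assume "m0 \<le> i"
      show "tr v i = 0"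
      proof (cases "i = m0")
        case True thus ?thesis by (simp add: tr_def)
      next
        case False
        hence "Suc m0 \<le> i" using \<open>m0 \<le> i\<close> by simp
        thus ?thesis using vF False unfolding F2vec_def tr_def by simp
      qed
    qed
    have key: "ps g' (Suc m0) v = (if v m0 = 1 then M p (ps g m0 (tr v)) h else ps g m0 (tr v))" for v
    proof -
      have "ps g' m0 v = ps g m0 v" by (rule psi_gcong) (simp add: g'_def)
      also have "\<dots> = ps g m0 (tr v)" by (rule psi_trunc) (simp add: tr_def)
      finally show ?thesis by (simp add: g'_def)
    qed
    have veq: "v = w" if "tr v = tr w" "v m0 = w m0" for v w :: "nat \<Rightarrow> bit"
    proof
      fix i show "v i = w i" using that unfolding tr_def by (cases "i = m0") (auto dest: fun_cong[of _ _ i])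
    qed
    have cross: False if v: "v \<in> F2vec (Suc m0)" and w: "w \<in> F2vec (Suc m0)"
      and eq: "M p (ps g m0 (tr v)) h = ps g m0 (tr w)" for v w
    proof -
      have O: "ps g m0 (tr v) \<in> \<Omega>" "ps g m0 (tr w) \<in> \<Omega>" using ps_in g(1) by auto
      have hh: "M p (ps g m0 (tr v)) h \<in> \<Omega>" using ad_in O h(1) by blast
      have "M p (ps g m0 (tr v)) (M p (ps g m0 (tr v)) h) = M p (M p (ps g m0 (tr v)) h) (ps g m0 (tr v))"
        by (rule ad_comm[OF O(1) hh])
      also have "\<dots> = M (ps g m0 (tr v)) h (ps g m0 (tr v))" by (rule s_add[OF O(1) h(1) O(1)])
      also have "\<dots> = h" by simp
      finally have "h = M p (ps g m0 (tr v)) (M p (ps g m0 (tr v)) h)" by simp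
      also have "\<dots> = M p (ps g m0 (tr v)) (ps g m0 (tr w))" using eq by simp
      also have "\<dots> = ps g m0 (vadd (tr v) (tr w))" using ps_add g(1) by simp
      finally have "h \<in> ps g m0 ` F2vec m0" using F2vec_vadd trF v w by blast
      thus False using h(2) by blast
    qed
    have "inj_on (ps g' (Suc m0)) (F2vec (Suc m0))"
    proof (rule inj_onI)
      fix v w assume v: "v \<in> F2vec (Suc m0)" and w: "w \<in> F2vec (Suc m0)"
        and eq: "ps g' (Suc m0) v = ps g' (Suc m0) w"
      have Ov: "ps g m0 (tr v) \<in> \<Omega>" "ps g m0 (tr w) \<in> \<Omega>" using ps_in g(1) by auto
      have eq2: "(if v m0 = 1 then M p (ps g m0 (tr v)) h else ps g m0 (tr v)) =
                 (if w m0 = 1 then M p (ps g m0 (tr w)) h else ps g m0 (tr w))"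
        using eq by (simp only: key)
      show "v = w"
      proof (cases "v m0 = 1"; cases "w m0 = 1")
        assume a: "v m0 = 1" "w m0 = 1"
        hence "M p (ps g m0 (tr v)) h = M p (ps g m0 (tr w)) h" using eq2 by simp
        hence "M p (M p (ps g m0 (tr v)) h) h = M p (M p (ps g m0 (tr w)) h) h" by simp
        hence "ps g m0 (tr v) = ps g m0 (tr w)" using ad_cancel Ov h(1) by simp
        hence "tr v = tr w" using g(2) trF v w by (meson inj_onD)
        thus "v = w" using veq a by simp
      next
        assume a: "\<not> v m0 = 1" "\<not> w m0 = 1"
        hence "ps g m0 (tr v) = ps g m0 (tr w)" using eq2 by simp
        hence "tr v = tr w" using g(2) trF v w by (meson inj_onD)
        thus "v = w" using veq a by simp
      next
        assume a: "v m0 = 1" "\<not> w m0 = 1"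
        hence "M p (ps g m0 (tr v)) h = ps g m0 (tr w)" using eq2 by simp
        thus "v = w" using cross v w by blast
      next
        assume a: "\<not> v m0 = 1" "w m0 = 1"
        hence "M p (ps g m0 (tr w)) h = ps g m0 (tr v)" using eq2 by simp
        thus "v = w" using cross v w by blast
      qed
    qed
    hence "Pm (Suc m0)" unfolding Pm_def using g'O by blast
    thus False using maxm[of "Suc m0"] by simp
  qed
  show ?thesis using g sur by (intro exI[of _ m0] exI[of _ g]) (simp add: bij_betw_def)
qed

end

lemma BQS_E:
  assumes "X \<in> BQS_lines m"
  obtains v1 v2 v3 v4 where "X = {v1,v2,v3,v4}" "v1 \<in> F2vec m" "v2 \<in> F2vec m" "v3 \<in> F2vec m" "v4 \<in> F2vec m"
    "v1 \<noteq> v2" "v1 \<noteq> v3" "v1 \<noteq> v4" "v2 \<noteq> v3" "v2 \<noteq> v4" "v3 \<noteq> v4" "\<forall>i. v1 i + v2 i + v3 i + v4 i = 0"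
proof -
  obtain v1 v2 v3 v4 where X: "X = {v1,v2,v3,v4}" "v1 \<in> F2vec m" "v2 \<in> F2vec m" "v3 \<in> F2vec m" "v4 \<in> F2vec m"
    "card {v1,v2,v3,v4} = 4" "\<forall>i. v1 i + v2 i + v3 i + v4 i = 0" using assms unfolding BQS_lines_def by blast
  have d: "v1 \<noteq> v2" "v1 \<noteq> v3" "v1 \<noteq> v4" "v2 \<noteq> v3" "v2 \<noteq> v4" "v3 \<noteq> v4"
    using X(6) by (auto simp: card_insert_if split: if_splits)
  show ?thesis using that X d by blast
qed

lemma BQS_I:
  assumes "v1 \<in> F2vec m" "v2 \<in> F2vec m" "v3 \<in> F2vec m" "v4 \<in> F2vec m"
    "v1 \<noteq> v2" "v1 \<noteq> v3" "v1 \<noteq> v4" "v2 \<noteq> v3" "v2 \<noteq> v4" "v3 \<noteq> v4" "\<forall>i. v1 i + v2 i + v3 i + v4 i = 0"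
  shows "{v1,v2,v3,v4} \<in> BQS_lines m"
proof -
  have "card {v1,v2,v3,v4} = 4" using assms by simp
  hence P: "v1 \<in> F2vec m \<and> v2 \<in> F2vec m \<and> v3 \<in> F2vec m \<and> v4 \<in> F2vec m \<and>
      card {v1,v2,v3,v4} = 4 \<and> (\<forall>i. v1 i + v2 i + v3 i + v4 i = 0)" using assms by blast
  show ?thesis unfolding BQS_lines_def mem_Collect_eq
    by (rule exI[of _ v1], rule exI[of _ v2], rule exI[of _ v3], rule exI[of _ v4]) (rule conjI[OF refl P])
qed

context sqsT begin

lemma T_BQS: "\<exists>m. is_BQS \<Omega> B m \<and> card \<Omega> = 2 ^ m"
proof -
  obtain m g where gO: "\<forall>i<m. g i \<in> \<Omega>" and bij: "bij_betw (ps g m) (F2vec m) \<Omega>" using basis by blast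
  define \<psi> where "\<psi> = ps g m"
  have inj: "inj_on \<psi> (F2vec m)" and im: "\<psi> ` F2vec m = \<Omega>" using bij unfolding bij_betw_def \<psi>_def by auto
  have padd: "\<psi> (vadd v w) = M p (\<psi> v) (\<psi> w)" for v w unfolding \<psi>_def using ps_add gO by blast
  have img: "image \<psi> ` BQS_lines m = set_mset B"
  proof
    show "image \<psi> ` BQS_lines m \<subseteq> set_mset B"
    proof
      fix Y assume "Y \<in> image \<psi> ` BQS_lines m"
      then obtain X where X: "X \<in> BQS_lines m" "Y = \<psi> ` X" by blast
      obtain v1 v2 v3 v4 where V: "X = {v1,v2,v3,v4}" "v1 \<in> F2vec m" "v2 \<in> F2vec m" "v3 \<in> F2vec m" "v4 \<in> F2vec m"
        "v1 \<noteq> v2" "v1 \<noteq> v3" "v1 \<noteq> v4" "v2 \<noteq> v3" "v2 \<noteq> v4" "v3 \<noteq> v4" "\<forall>i. v1 i + v2 i + v3 i + v4 i = 0"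
        using BQS_E[OF X(1)] by metis
      have "v4 = vadd (vadd v1 v2) v3" using V(12) by (auto simp: vadd_def fun_eq_iff bit_sum4 simp del: add_bit_eq_xor)
      hence e4: "\<psi> v4 = M p (M p (\<psi> v1) (\<psi> v2)) (\<psi> v3)" using padd by simp
      have O: "\<psi> v1 \<in> \<Omega>" "\<psi> v2 \<in> \<Omega>" "\<psi> v3 \<in> \<Omega>" using im V by auto
      have D: "\<psi> v1 \<noteq> \<psi> v2" "\<psi> v1 \<noteq> \<psi> v3" "\<psi> v2 \<noteq> \<psi> v3" using inj V by (metis inj_onD)+
      have "\<psi> v4 = M (\<psi> v1) (\<psi> v2) (\<psi> v3)" using e4 s_add O by simp
      hence "Y = {\<psi> v1, \<psi> v2, \<psi> v3, M (\<psi> v1) (\<psi> v2) (\<psi> v3)}" using X(2) V(1) by simp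
      thus "Y \<in> set_mset B" using blk(1)[OF O D] by simp
    qed
    show "set_mset B \<subseteq> image \<psi> ` BQS_lines m"
    proof
      fix L assume L: "L \<in> set_mset B"
      then obtain a b c where abc: "a \<in> \<Omega>" "b \<in> \<Omega>" "c \<in> \<Omega>" "a \<noteq> b" "a \<noteq> c" "b \<noteq> c"
        "L = {a,b,c,M a b c}" "M a b c \<notin> {a,b,c}" using line_form by (metis)
      obtain va where va: "va \<in> F2vec m" "\<psi> va = a" using im abc(1) by blast
      obtain vb where vb: "vb \<in> F2vec m" "\<psi> vb = b" using im abc(2) by blast
      obtain vc where vc: "vc \<in> F2vec m" "\<psi> vc = c" using im abc(3) by blast
      define vd where "vd = vadd (vadd va vb) vc"
      have vdF: "vd \<in> F2vec m" unfolding vd_def using F2vec_vadd va vb vc by blast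
      have "\<psi> vd = M p (M p a b) c" unfolding vd_def using padd va vb vc by simp
      hence pd: "\<psi> vd = M a b c" using s_add abc by simp
      have D: "va \<noteq> vb" "va \<noteq> vc" "va \<noteq> vd" "vb \<noteq> vc" "vb \<noteq> vd" "vc \<noteq> vd"
        using abc va vb vc pd by auto
      have S: "\<forall>i. va i + vb i + vc i + vd i = 0" unfolding vd_def vadd_def
        by (simp only: bit_sum4) simp
      have "{va,vb,vc,vd} \<in> BQS_lines m" using BQS_I[OF va(1) vb(1) vc(1) vdF D S] .
      moreover have "L = \<psi> ` {va,vb,vc,vd}" using abc(7) va vb vc pd by simp
      ultimately show "L \<in> image \<psi> ` BQS_lines m" by blast
    qed
  qed
  define \<phi> where "\<phi> = inv_into (F2vec m) \<psi>"
  have bij\<phi>: "bij_betw \<phi> \<Omega> (F2vec m)" unfolding \<phi>_def \<psi>_def by (rule bij_betw_inv_into[OF bij])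
  have injphi: "inj_on \<phi> \<Omega>" using bij\<phi> bij_betw_def by blast
  have "inj_on (image \<phi>) (set_mset B)"
  proof (rule inj_on_image)
    have "\<Union> (set_mset B) \<subseteq> \<Omega>" using lineO by blast
    thus "inj_on \<phi> (\<Union> (set_mset B))" using injphi inj_on_subset by blast
  qed
  hence "image_mset (image \<phi>) B = mset_set (image \<phi> ` set_mset B)"
    by (subst Bset) (rule image_mset_mset_set)
  also have "image \<phi> ` set_mset B = BQS_lines m"
  proof -
    have "image \<phi> ` set_mset B = (\<lambda>X. \<phi> ` \<psi> ` X) ` BQS_lines m" unfolding img[symmetric] by (simp add: image_image)
    also have "\<dots> = (\<lambda>X. X) ` BQS_lines m"
    proof (rule image_cong[OF refl])
      fix X assume "X \<in> BQS_lines m"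
      hence "X \<subseteq> F2vec m" by (simp only: BQS_char)
      thus "\<phi> ` \<psi> ` X = X" unfolding \<phi>_def using inj by simp
    qed
    finally show ?thesis by simp
  qed
  finally have "is_BQS \<Omega> B m" unfolding is_BQS_def using bij\<phi> by blast
  moreover have "card \<Omega> = 2 ^ m" using bij_betw_same_card[OF bij] card_F2vec by simp
  ultimately show ?thesis by blast
qed

end

context sqs begin

lemma BQS_card: "is_BQS \<Omega> B m \<Longrightarrow> card \<Omega> = 2 ^ m"
  unfolding is_BQS_def using bij_betw_same_card card_F2vec by metis

lemma BQS_tri: assumes "is_BQS \<Omega> B m" shows "prop_triangle B"
proof -
  obtain \<phi> where bij: "bij_betw \<phi> \<Omega> (F2vec m)" and E: "image_mset (image \<phi>) B = mset_set (BQS_lines m)"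
    using assms unfolding is_BQS_def by blast
  have inj: "inj_on \<phi> \<Omega>" and imO: "\<phi> ` \<Omega> = F2vec m" using bij unfolding bij_betw_def by auto
  have inB: "\<phi> ` L \<in> BQS_lines m" if "L \<in># B" for L
  proof -
    have "\<phi> ` L \<in># image_mset (image \<phi>) B" using that by simp
    thus ?thesis unfolding E using finite_BQS by simp
  qed
  have bk: "\<exists>L\<in>#B. \<phi> ` L = X" if "X \<in> BQS_lines m" for X
  proof -
    have "X \<in># image_mset (image \<phi>) B" unfolding E using that finite_BQS by simp
    thus ?thesis by auto
  qed
  show ?thesis unfolding prop_triangle_def
  proof (intro ballI impI)
    fix L1 L2 assume L: "L1 \<in># B" "L2 \<in># B" and c2: "card (L1 \<inter> L2) = 2"
    have LO: "L1 \<subseteq> \<Omega>" "L2 \<subseteq> \<Omega>" using lineO L by auto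
    define X where "X = \<phi> ` L1"
    define Y where "Y = \<phi> ` L2"
    have XB0: "X \<subseteq> F2vec m \<and> card X = 4 \<and> (\<forall>i. (\<Sum>v\<in>X. v i) = 0)"
      unfolding X_def by (rule BQS_char[THEN iffD1, OF inB[OF L(1)]])
    have YB0: "Y \<subseteq> F2vec m \<and> card Y = 4 \<and> (\<forall>i. (\<Sum>v\<in>Y. v i) = 0)"
      unfolding Y_def by (rule BQS_char[THEN iffD1, OF inB[OF L(2)]])
    have XB: "X \<subseteq> F2vec m" "card X = 4" "\<forall>i. (\<Sum>v\<in>X. v i) = 0" using XB0 by auto
    have YB: "Y \<subseteq> F2vec m" "card Y = 4" "\<forall>i. (\<Sum>v\<in>Y. v i) = 0" using YB0 by auto
    have finX: "finite X" "finite Y" using XB(2) YB(2) by (metis card.infinite zero_neq_numeral)+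
    have XY: "X \<inter> Y = \<phi> ` (L1 \<inter> L2)" unfolding X_def Y_def by (rule inj_on_image_Int[OF inj LO, symmetric])
    have cXY: "card (X \<inter> Y) = 2"
    proof -
      have "inj_on \<phi> (L1 \<inter> L2)" by (rule inj_on_subset[OF inj]) (use LO in blast)
      hence "card (\<phi> ` (L1 \<inter> L2)) = card (L1 \<inter> L2)" by (rule card_image)
      thus ?thesis unfolding XY using c2 by simp
    qed
    define Z where "Z = (X - Y) \<union> (Y - X)"
    have i1: "\<phi> ` (L1 - L2) = X - Y" unfolding X_def Y_def by (rule inj_on_image_set_diff[OF inj]) (use LO in auto)
    have i2: "\<phi> ` (L2 - L1) = Y - X" unfolding X_def Y_def by (rule inj_on_image_set_diff[OF inj]) (use LO in auto)
    have ZI: "Z = \<phi> ` ((L1 - L2) \<union> (L2 - L1))" unfolding Z_def image_Un i1 i2 ..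
    have dis: "(X - Y) \<inter> (Y - X) = {}" by blast
    have cZ: "card Z = 4"
    proof -
      have "card (X - Y) = 2" using card_Diff_subset_Int[of X Y] finX XB cXY by simp
      moreover have "card (Y - X) = 2" using card_Diff_subset_Int[of Y X] finX YB cXY by (simp add: Int_commute)
      moreover have "card Z = card (X - Y) + card (Y - X)" unfolding Z_def by (rule card_Un_disjoint[OF _ _ dis]) (use finX in auto)
      ultimately show ?thesis by simp
    qed
    have sZ: "\<forall>i. (\<Sum>v\<in>Z. v i) = 0"
    proof
      fix i
      have "(\<Sum>v\<in>X \<inter> Y. v i) + (\<Sum>v\<in>X - Y. v i) = 0"
        using sum.Int_Diff[OF finX(1), of "\<lambda>v. v i" Y] XB(3) by simp
      hence e1: "(\<Sum>v\<in>X \<inter> Y. v i) = (\<Sum>v\<in>X - Y. v i)" by (rule bit_sum2[THEN iffD1])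
      have "(\<Sum>v\<in>Y \<inter> X. v i) + (\<Sum>v\<in>Y - X. v i) = 0"
        using sum.Int_Diff[OF finX(2), of "\<lambda>v. v i" X] YB(3) by simp
      hence e2: "(\<Sum>v\<in>X \<inter> Y. v i) = (\<Sum>v\<in>Y - X. v i)" unfolding Int_commute[of Y X] by (rule bit_sum2[THEN iffD1])
      have "(\<Sum>v\<in>Z. v i) = (\<Sum>v\<in>X - Y. v i) + (\<Sum>v\<in>Y - X. v i)"
        unfolding Z_def by (rule sum.union_disjoint) (use finX dis in auto)
      also have "\<dots> = 0" unfolding e1[symmetric] e2[symmetric] by (rule bit_self)
      finally show "(\<Sum>v\<in>Z. v i) = 0" .
    qed
    have "Z \<subseteq> F2vec m" unfolding Z_def using XB YB by blast
    hence "Z \<in> BQS_lines m" using cZ sZ by (intro BQS_char[THEN iffD2]) blast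
    then obtain L where L': "L \<in># B" "\<phi> ` L = Z" using bk by blast
    have "L \<subseteq> \<Omega>" using lineO L' by blast
    moreover have "(L1 - L2) \<union> (L2 - L1) \<subseteq> \<Omega>" using LO by blast
    moreover have "\<phi> ` L = \<phi> ` ((L1 - L2) \<union> (L2 - L1))" using L'(2) ZI by simp
    ultimately have "L = (L1 - L2) \<union> (L2 - L1)" using inj_on_image_eq_iff[OF inj] by blast
    thus "(L1 - L2) \<union> (L2 - L1) \<in># B" using L' by simp
  qed
qed

end

lemma m_ge2: assumes "(2::nat) ^ m = 2 * lam + 2" "lam \<ge> 1" shows "m \<ge> 2"
proof (rule ccontr)
  assume "\<not> 2 \<le> m"
  hence "m \<le> 1" by simp
  hence "(2::nat) ^ m \<le> 2 ^ 1" by (rule power_increasing) simp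
  thus False using assms by simp
qed

theorem proposition5p3:
  fixes \<Omega> :: "'a set" and B :: "'a set multiset" and lam :: nat and pinf :: 'a
  assumes "design_2_4 \<Omega> B (2 * lam + 2) lam"
    and "lam \<ge> 1"
    and "supersimple B"
    and "pinf \<in> \<Omega>"
  shows "(prop_triangle B \<longleftrightarrow> (\<exists>m\<ge>2. is_BQS \<Omega> B m)) \<and>
         ((\<exists>m\<ge>2. is_BQS \<Omega> B m) \<longleftrightarrow>
            (pi_inf \<Omega> B pinf = {id} \<and>
             (\<exists>m\<ge>2. elem_abelian_2group (L_inf \<Omega> B pinf) \<and> card (L_inf \<Omega> B pinf) = 2 ^ m)))"
proof -
  interpret sqs \<Omega> B lam by unfold_locales (rule assms)+
  have TB: "\<exists>m\<ge>2. is_BQS \<Omega> B m \<and> card \<Omega> = 2 ^ m" if T: Tprop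
  proof -
    interpret sqsT \<Omega> B lam pinf by unfold_locales (rule T, rule assms(4))
    obtain m where m: "is_BQS \<Omega> B m" "card \<Omega> = 2 ^ m" using T_BQS by blast
    have "m \<ge> 2" using m_ge2[OF _ assms(2)] m(2) cardO by simp
    thus ?thesis using m by blast
  qed
  have e1: "prop_triangle B \<longleftrightarrow> Tprop" using tri_T T_tri by blast
  have e2: "(\<exists>m\<ge>2. is_BQS \<Omega> B m) \<longleftrightarrow> Tprop"
  proof
    assume "\<exists>m\<ge>2. is_BQS \<Omega> B m"
    then obtain m where "is_BQS \<Omega> B m" by blast
    thus Tprop using BQS_tri tri_T by blast
  next
    assume Tprop thus "\<exists>m\<ge>2. is_BQS \<Omega> B m" using TB by blast
  qed
  have e3: "(pi_inf \<Omega> B pinf = {id} \<and>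
             (\<exists>m\<ge>2. elem_abelian_2group (L_inf \<Omega> B pinf) \<and> card (L_inf \<Omega> B pinf) = 2 ^ m)) \<longleftrightarrow> Tprop"
  proof
    assume "pi_inf \<Omega> B pinf = {id} \<and>
             (\<exists>m\<ge>2. elem_abelian_2group (L_inf \<Omega> B pinf) \<and> card (L_inf \<Omega> B pinf) = 2 ^ m)"
    thus Tprop using G3_T[OF assms(4)] by blast
  next
    assume T: Tprop
    obtain m where m: "m \<ge> 2" "card \<Omega> = 2 ^ m" using TB[OF T] by blast
    have "card (L_inf \<Omega> B pinf) = 2 ^ m" using T_card[OF T assms(4)] m(2) by simp
    thus "pi_inf \<Omega> B pinf = {id} \<and>
             (\<exists>m\<ge>2. elem_abelian_2group (L_inf \<Omega> B pinf) \<and> card (L_inf \<Omega> B pinf) = 2 ^ m)"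
      using T_pi[OF T assms(4)] T_group[OF T assms(4)] m(1) by blast
  qed
  show ?thesis using e1 e2 e3 by blast
qed

end
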